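(* Let $q=p^k$ be an odd prime power and let $\alpha\in\mathbb{F}_{q^2}^*$ have multiplicative order $q+1$. Let $Q,R,S\in\{p^i:i\ge0\}$ and $N=Q+R+S$. Then $$x^{N}+\alpha^{R+S}x^{Q+q(R+S)}+\alpha^{Q+S}x^{R+q(Q+S)}+\alpha^{Q+R}x^{S+q(Q+R)}$$ is a permutation polynomial of $\mathbb{F}_{q^2}$ if and only if $\gcd(N,q-1)=1$.
   Context: A polynomial is a permutation polynomial of $\mathbb{F}_{q^2}$ if the map it induces on $\mathbb{F}_{q^2}$ is bijective. *)

theory Defs
  imports "HOL-Computational_Algebra.Polynomial" "HOL-Computational_Algebra.Primes"
begin

definition permutation_polynomial :: "'a::field poly \<Rightarrow> bool" where
  "permutation_polynomial f \<longleftrightarrow> bij (poly f)"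

definition has_mult_order :: "'a::field \<Rightarrow> nat \<Rightarrow> bool" where
  "has_mult_order a n \<longleftrightarrow> a \<noteq> 0 \<and> 0 < n \<and> a ^ n = 1 \<and> (\<forall>m. 0 < m \<and> m < n \<longrightarrow> a ^ m \<noteq> 1)"

end

theory Submission
  imports Defs
begin

lemma pow_card_field:
  fixes x :: "'a :: {field,finite}"
  shows "x ^ card (UNIV :: 'a set) = x"
proof (cases "x = 0")
  case False
  have "x * (\<Prod>y\<in>UNIV-{0}. x * y) = x * x ^ (card (UNIV :: 'a set) - 1) * \<Prod>(UNIV-{0})"
    by (simp add: prod.distrib mult_ac)
  also have "x * x ^ (card (UNIV :: 'a set) - 1) = x ^ Suc (card (UNIV :: 'a set) - 1)"
    by (subst power_Suc) auto
  also have "Suc (card (UNIV :: 'a set) - 1) = card (UNIV :: 'a set)"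
    using finite_UNIV_card_ge_0[where ?'a = 'a] by simp
  also have "(\<Prod>y\<in>UNIV-{0}. x * y) = (\<Prod>y\<in>UNIV-{0}. y)"
    by (rule prod.reindex_bij_witness[of _ "\<lambda>y. y / x" "\<lambda>y. x * y"]) (use False in auto)
  finally show ?thesis
    by simp
qed (use finite_UNIV_card_ge_0[where ?'a = 'a] in auto)

lemma char_eq_field:
  fixes p m :: nat
  assumes "prime p" "m \<ge> 1" "card (UNIV :: 'a :: {field,finite} set) = p ^ m"
  shows "CHAR('a) = p"
proof -
  have pc: "prime CHAR('a)"
    by (rule prime_CHAR_semidom) (simp add: finite_imp_CHAR_pos)
  have "(\<Sum>y\<in>UNIV. y + (1::'a)) = (\<Sum>y\<in>UNIV. y)"
    by (rule sum.reindex_bij_witness[of _ "\<lambda>y. y - 1" "\<lambda>y. y + 1"]) auto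
  hence "of_nat (card (UNIV :: 'a set)) = (0::'a)" by (simp add: sum.distrib)
  hence "CHAR('a) dvd p ^ m" using assms(3) of_nat_eq_0_iff_char_dvd by metis
  hence "CHAR('a) dvd p" using pc prime_dvd_power by blast
  thus ?thesis using pc assms(1) primes_dvd_imp_eq by blast
qed

lemma exists_root_unity:
  fixes d :: nat
  assumes "d \<ge> 2" "d dvd card (UNIV :: 'a :: {field,finite} set) - 1"
  shows "\<exists>w::'a. w ^ d = 1 \<and> w \<noteq> 1"
proof (rule ccontr)
  assume nex: "\<not> ?thesis"
  define n where "n = card (UNIV :: 'a set) - 1"
  obtain e where ne: "n = d * e" using assms(2) n_def by blast
  have cpos: "card (UNIV :: 'a set) \<ge> 2"
  proof -
    have "{0, 1::'a} \<subseteq> UNIV" by simp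
    hence "card {0,1::'a} \<le> card (UNIV :: 'a set)" by (intro card_mono) auto
    thus ?thesis by simp
  qed
  hence "n \<ge> 1" using n_def by simp
  hence epos: "e \<ge> 1" using ne by (cases e) auto
  define G :: "'a poly" where "G = (\<Sum>i<e. monom 1 (d * i))"
  have pG: "poly G w = (\<Sum>i<e. (w ^ d) ^ i)" for w
    by (simp add: G_def poly_sum poly_monom power_mult)
  have G0: "G \<noteq> 0"
  proof
    assume "G = 0"
    hence "poly G 0 = 0" by simp
    moreover have "poly G 0 = 1"
    proof -
      have "poly G 0 = (\<Sum>i<e. (0::'a) ^ i)" using pG[of 0] assms(1) by (simp add: power_0_left)
      also have "\<dots> = (\<Sum>i\<in>{0}. (0::'a) ^ i)"
        by (rule sum.mono_neutral_right) (use epos in auto)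
      finally show ?thesis by simp
    qed
    ultimately show False by simp
  qed
  have dG: "degree G \<le> d * (e - 1)"
    unfolding G_def
  proof (rule degree_sum_le)
    fix i assume "i \<in> {..<e}"
    hence "d * i \<le> d * (e - 1)" by (intro mult_le_mono2) auto
    thus "degree (monom (1::'a) (d * i)) \<le> d * (e - 1)" using degree_monom_le order.trans by blast
  qed simp
  have sub: "UNIV - {0} \<subseteq> {1} \<union> {w. poly G w = 0}"
  proof
    fix w :: 'a assume "w \<in> UNIV - {0}"
    hence w0: "w \<noteq> 0" by simp
    have "w ^ card (UNIV :: 'a set) = w" by (rule pow_card_field)
    moreover have "card (UNIV :: 'a set) = Suc n" using cpos n_def by simp
    ultimately have "w * w ^ n = w * 1" by simp
    hence "w ^ n = 1" using w0 by simp
    hence "1 - (w ^ d) ^ e = 0" using ne by (simp add: power_mult)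
    hence "(1 - w ^ d) * poly G w = 0" by (simp add: pG one_diff_power_eq)
    moreover have "w ^ d = 1 \<longrightarrow> w = 1" using nex by blast
    ultimately show "w \<in> {1} \<union> {w. poly G w = 0}" by auto
  qed
  have cn: "card (UNIV - {0::'a}) = n" using n_def by (simp add: card_Diff_singleton)
  have "card (UNIV - {0::'a}) \<le> card ({1} \<union> {w::'a. poly G w = 0})"
    using card_mono[OF _ sub] by simp
  also have "\<dots> \<le> card {1::'a} + card {w::'a. poly G w = 0}" by (rule card_Un_le)
  also have "\<dots> \<le> 1 + d * (e - 1)" using card_poly_roots_bound[OF G0] dG by simp
  finally have "n \<le> 1 + d * (e - 1)" using cn by simp
  hence "d * e \<le> 1 + d * (e - 1)" using ne by simp
  moreover have "d * e = d + d * (e - 1)" using epos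
    by (metis add.commute le_add_diff_inverse2 mult.right_neutral distrib_left)
  ultimately show False using assms(1) by simp
qed


lemma key_identity:
  fixes x y \<alpha> :: "'a::field" and Q R S N q :: nat
  assumes hQ: "(x + \<alpha>*y)^Q = x^Q + \<alpha>^Q*y^Q" "(x - \<alpha>*y)^Q = x^Q - \<alpha>^Q*y^Q"
    and hR: "(x + \<alpha>*y)^R = x^R + \<alpha>^R*y^R" "(x - \<alpha>*y)^R = x^R - \<alpha>^R*y^R"
    and hS: "(x + \<alpha>*y)^S = x^S + \<alpha>^S*y^S" "(x - \<alpha>*y)^S = x^S - \<alpha>^S*y^S"
    and hy: "y = x ^ q" and hN: "N = Q + R + S"
  shows "2 * (x^N + \<alpha>^(R+S) * x^(Q+q*(R+S)) + \<alpha>^(Q+S) * x^(R+q*(Q+S))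
          + \<alpha>^(Q+R) * x^(S+q*(Q+R))) = (x + \<alpha>*y)^N + (x - \<alpha>*y)^N"
proof -
  have e1: "x^(Q+q*(R+S)) = x^Q*y^R*y^S" "x^(R+q*(Q+S)) = x^R*y^Q*y^S"
     "x^(S+q*(Q+R)) = x^S*y^Q*y^R"
    by (simp_all add: hy power_add power_mult mult.assoc)
  have e2: "(x + \<alpha>*y)^N = (x^Q + \<alpha>^Q*y^Q)*(x^R + \<alpha>^R*y^R)*(x^S + \<alpha>^S*y^S)"
    "(x - \<alpha>*y)^N = (x^Q - \<alpha>^Q*y^Q)*(x^R - \<alpha>^R*y^R)*(x^S - \<alpha>^S*y^S)"
    using hQ hR hS by (simp_all add: hN power_add)
  have e3: "x^N = x^Q*x^R*x^S" by (simp add: hN power_add)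
  show ?thesis unfolding e1 e2 e3 by (simp add: power_add algebra_simps)
qed

lemma root_unique:
  fixes u u' \<beta> :: "'a::field" and q N :: nat
  assumes "u^q = \<beta>*u" "u'^q = \<beta>*u'" "\<beta> \<noteq> 0" "u^N = u'^N" "N > 0" "gcd N (q - 1) = 1" "q \<ge> 1"
  shows "u = u'"
proof (cases "u' = 0")
  case True
  hence "u^N = 0" using assms(4,5) by (simp add: zero_power)
  thus ?thesis using True by simp
next
  case False
  define w where "w = u / u'"
  have wq: "w^q = w" using assms(1,2,3) False by (simp add: w_def power_divide)
  have wN: "w^N = 1" using assms(4) False by (simp add: w_def power_divide)
  hence w0: "w \<noteq> 0" using assms(5) by (auto simp: power_0_left)
  have "w * w^(q-1) = w * 1" using wq assms(7)
    by (metis Suc_diff_1 less_le_trans mult.right_neutral power_Suc zero_less_one)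
  hence wq1: "w^(q-1) = 1" using w0 by simp
  obtain a b where ab: "N * a = (q-1) * b + gcd N (q-1)" using bezout_nat[of N "q-1"] assms(5) by auto
  have "1 = (w^N)^a" using wN by simp
  also have "\<dots> = w^(N*a)" by (simp add: power_mult)
  also have "\<dots> = (w^(q-1))^b * w" using ab assms(6) by (simp add: power_add power_mult)
  also have "\<dots> = w" using wq1 by simp
  finally have "w = 1" by simp
  thus ?thesis using False by (simp add: w_def)
qed

lemma cancel_parts:
  fixes u u' v v' \<beta> :: "'a::field" and q N :: nat
  assumes hadd: "\<And>a b::'a. (a+b)^q = a^q + b^q"
    and "u^q = \<beta>*u" "u'^q = \<beta>*u'" "v^q = -\<beta>*v" "v'^q = -\<beta>*v'"
    and "\<beta> \<noteq> 0" "(2::'a) \<noteq> 0" "odd N" "u^N + v^N = u'^N + v'^N"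
  shows "u^N = u'^N \<and> v^N = v'^N"
proof -
  have hd: "(a-b)^q = a^q - b^q" for a b :: 'a
    using hadd[of "a-b" b] by (simp add: algebra_simps)
  have pw: "(z^N)^q = (z^q)^N" for z :: 'a by (simp flip: power_mult add: mult.commute)
  define D where "D = u^N - u'^N"
  have D2: "D = v'^N - v^N" using assms(9) by (simp add: D_def algebra_simps)
  have "D^q = \<beta>^N * D" unfolding D_def hd pw assms(2,3) by (simp add: power_mult_distrib algebra_simps)
  moreover have "D^q = -(\<beta>^N) * D" unfolding D2 hd pw assms(4,5)
    using assms(8) by (simp add: power_mult_distrib algebra_simps)
  ultimately have "2 * \<beta>^N * D = 0" by (simp add: algebra_simps)
  hence "D = 0" using assms(6,7) by simp
  thus ?thesis using D2 by (simp add: D_def)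
qed

theorem mainTheorem11:
  fixes p k q Q R S N :: nat and \<alpha> :: "'a::{field,finite}"
  assumes "prime p" and "odd p" and "k \<ge> 1" and "q = p ^ k"
    and "card (UNIV :: 'a set) = q ^ 2"
    and "has_mult_order \<alpha> (q + 1)"
    and "\<exists>i. Q = p ^ i" and "\<exists>i. R = p ^ i" and "\<exists>i. S = p ^ i"
    and "N = Q + R + S"
  shows "permutation_polynomial
           (monom 1 N
            + monom (\<alpha> ^ (R + S)) (Q + q * (R + S))
            + monom (\<alpha> ^ (Q + S)) (R + q * (Q + S))
            + monom (\<alpha> ^ (Q + R)) (S + q * (Q + R)))
         \<longleftrightarrow> gcd N (q - 1) = 1" (is "permutation_polynomial ?F \<longleftrightarrow> _")
proof -
  from assms(7-9) obtain i j l where Qi: "Q = p^i" and Rj: "R = p^j" and Sl: "S = p^l" by blast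
  have "p \<ge> 2" by (rule prime_ge_2_nat[OF assms(1)])
  moreover have "p \<noteq> 2" using assms(2) by auto
  ultimately have p2: "p \<ge> 3" by linarith
  have chr: "CHAR('a) = p"
    by (rule char_eq_field[of p "2*k"]) (use assms in \<open>auto simp: power_mult mult.commute\<close>)
  have pc: "prime CHAR('a)" using chr assms(1) by simp
  have fr: "(x + y)^(p^m) = x^(p^m) + y^(p^m)" for x y :: 'a and m
    using freshmans_dream'[OF pc, of "p^m" m] chr by simp
  have oddpow: "odd (p^m)" for m using assms(2) by simp
  have negp: "(-x)^(p^m) = - (x^(p^m))" for x :: 'a and m
    using oddpow[of m] by simp
  have frd: "(x - y)^(p^m) = x^(p^m) - y^(p^m)" for x y :: 'a and m
    using fr[of x "-y" m] negp[of y m] by simp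
  have two: "(2::'a) \<noteq> 0"
  proof
    assume "(2::'a) = 0"
    hence "of_nat 2 = (0::'a)" by simp
    hence "p dvd 2" using of_nat_eq_0_iff_char_dvd chr by metis
    hence "p \<le> 2" by (rule dvd_imp_le) simp
    thus False using p2 by simp
  qed
  have qp: "q \<ge> p" using power_increasing[of 1 k p] assms(3,4) p2 by simp
  have q3: "q \<ge> 3" using qp p2 by simp
  have cq: "card (UNIV :: 'a set) = q*q" using assms(5) by (simp add: power2_eq_square)
  have frob: "x^(q*q) = x" for x :: 'a using pow_card_field[where x=x] unfolding cq .
  have cadd: "(x + y)^q = x^q + y^q" for x y :: 'a using fr assms(4) by simp
  have a0: "\<alpha> \<noteq> 0" and aq1: "\<alpha>^(q+1) = 1" and amin: "\<And>m. 0 < m \<Longrightarrow> m < q+1 \<Longrightarrow> \<alpha>^m \<noteq> 1"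
    using assms(6) unfolding has_mult_order_def by auto
  have aq: "\<alpha>^q = inverse \<alpha>" using aq1 a0 by (simp add: field_simps)
  have am1: "\<alpha> \<noteq> -1"
  proof
    assume "\<alpha> = -1"
    hence "\<alpha>^2 = 1" by simp
    thus False using amin[of 2] q3 by simp
  qed
  have oQ: "odd Q" "odd R" "odd S" using Qi Rj Sl oddpow by simp_all
  have oddN: "odd N" using assms(10) oQ by simp
  have Npos: "N > 0" using oddN by (cases N) auto
  have key: "2 * poly ?F x = (x + \<alpha>*x^q)^N + (x - \<alpha>*x^q)^N" for x :: 'a
  proof -
    have "2 * poly ?F x = 2 * (x^N + \<alpha>^(R+S) * x^(Q+q*(R+S)) + \<alpha>^(Q+S) * x^(R+q*(Q+S))
          + \<alpha>^(Q+R) * x^(S+q*(Q+R)))" by (simp add: poly_monom)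
    also have "\<dots> = (x + \<alpha>*x^q)^N + (x - \<alpha>*x^q)^N"
      by (rule key_identity) (simp_all add: Qi Rj Sl fr frd power_mult_distrib assms(10))
    finally show ?thesis .
  qed
  show ?thesis
  proof
    assume pp: "permutation_polynomial ?F"
    hence inj: "inj (poly ?F)" unfolding permutation_polynomial_def by (simp add: bij_is_inj)
    show "gcd N (q - 1) = 1"
    proof (rule ccontr)
      assume dn: "gcd N (q - 1) \<noteq> 1"
      define d where "d = gcd N (q - 1)"
      have dp: "d > 0" using Npos d_def by simp
      have "d \<noteq> 1" using dn d_def by simp
      hence d2: "d \<ge> 2" using dp by linarith
      have "q - 1 dvd card (UNIV :: 'a set) - 1"
      proof -
        have "card (UNIV :: 'a set) - 1 = (q - 1) * (q + 1)" using assms(5) q3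
          by (simp add: power2_eq_square algebra_simps)
        thus ?thesis by simp
      qed
      hence "d dvd card (UNIV :: 'a set) - 1" using d_def dvd_trans gcd_dvd2 by blast
      then obtain w :: 'a where w1: "w^d = 1" and wn1: "w \<noteq> 1" using exists_root_unity d2 by blast
      have wq1: "w^(q-1) = 1" using w1 d_def
        by (metis gcd_dvd2 dvd_def power_mult power_one)
      have wN: "w^N = 1" using w1 d_def
        by (metis gcd_dvd1 dvd_def power_mult power_one)
      have "q = Suc (q - 1)" using q3 by simp
      hence "w^q = w * w^(q-1)" by (metis power_Suc)
      hence wq: "w^q = w" using wq1 by simp
      have fix_val: "poly ?F z = (2*z)^N / 2" if hz: "\<alpha> * z^q = z" for z :: 'a
        using key[of z] hz two by (simp add: field_simps zero_power Npos)
      define u where "u = 1 + \<alpha>"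
      have u0: "u \<noteq> 0" using am1 unfolding u_def by (metis add.commute add_eq_0_iff)
      define x0 where "x0 = u / 2"
      have tq: "(2::'a)^q = 2" using cadd[of 1 1] by simp
      have uq: "(1 + \<alpha>)^q = 1 + inverse \<alpha>" using cadd[of 1 \<alpha>] aq by simp
      have x0q: "x0^q = (1 + inverse \<alpha>) / 2" unfolding x0_def u_def power_divide tq uq ..
      have hx0: "\<alpha> * x0^q = x0"
      proof -
        have "\<alpha> * x0^q = \<alpha> * ((1 + inverse \<alpha>) / 2)" using x0q by simp
        also have "\<dots> = x0" unfolding x0_def u_def using a0 two by (simp add: field_simps)
        finally show ?thesis .
      qed
      have hy0: "\<alpha> * (w*x0)^q = w*x0" using hx0 wq by (simp add: power_mult_distrib algebra_simps)
      have e: "(2*(w*x0))^N = (2*x0)^N"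
      proof -
        have "(2*(w*x0))^N = w^N * (2*x0)^N" by (simp add: power_mult_distrib mult.left_commute)
        thus ?thesis using wN by simp
      qed
      have "poly ?F (w*x0) = poly ?F x0"
        unfolding fix_val[OF hx0] fix_val[OF hy0] e ..
      hence "w * x0 = x0" by (rule injD[OF inj])
      moreover have "x0 \<noteq> 0" unfolding x0_def using u0 two by simp
      ultimately show False using wn1 by simp
    qed
  next
    assume g: "gcd N (q - 1) = 1"
    have "inj (poly ?F)"
    proof (rule injI)
      fix x y :: 'a
      assume xy: "poly ?F x = poly ?F y"
      define u where "u = x + \<alpha>*x^q"
      define v where "v = x - \<alpha>*x^q"
      define u' where "u' = y + \<alpha>*y^q"
      define v' where "v' = y - \<alpha>*y^q"
      have qq: "(z^q)^q = z" for z :: 'a by (simp flip: power_mult add: frob)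
      have frq: "(a - b)^q = a^q - b^q" for a b :: 'a using frd assms(4) by simp
      have Lq: "(z + \<alpha>*z^q)^q = inverse \<alpha> * (z + \<alpha>*z^q)" for z :: 'a
        using cadd a0 by (simp add: power_mult_distrib aq qq field_simps)
      have Mq: "(z - \<alpha>*z^q)^q = - inverse \<alpha> * (z - \<alpha>*z^q)" for z :: 'a
      proof -
        have "(z - \<alpha>*z^q)^q = z^q - inverse \<alpha> * z"
          unfolding frq power_mult_distrib aq qq ..
        also have "\<dots> = - inverse \<alpha> * (z - \<alpha>*z^q)" using a0 by (simp add: field_simps)
        finally show ?thesis .
      qed
      have b0: "inverse \<alpha> \<noteq> 0" using a0 by simp
      have "u^N + v^N = u'^N + v'^N" using key[of x] key[of y] xy unfolding u_def v_def u'_def v'_def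
        by metis
      hence c: "u^N = u'^N \<and> v^N = v'^N"
        using cancel_parts[of q u "inverse \<alpha>" u' v v' N] cadd Lq Mq b0 two oddN
        unfolding u_def v_def u'_def v'_def by blast
      have q1: "q \<ge> 1" using q3 by simp
      have "u = u'" using root_unique[of u q "inverse \<alpha>" u' N] c Lq b0 Npos g q1
        unfolding u_def u'_def by blast
      moreover have "v = v'" using root_unique[of v q "- inverse \<alpha>" v' N] c Mq b0 Npos g q1
        unfolding v_def v'_def by simp
      moreover have "u + v = 2 * x" unfolding u_def v_def by simp
      moreover have "u' + v' = 2 * y" unfolding u'_def v'_def by simp
      ultimately have "2 * x = 2 * y" by (metis (no_types))
      thus "x = y" using two by simp
    qed
    thus "permutation_polynomial ?F" unfolding permutation_polynomial_def
      using finite_UNIV_inj_surj[of "poly ?F"] by (simp add: bij_def)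
  qed
qed

end
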